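(* Let $\pi$ be a probability distribution on $\mathbb{R}^d$ with coordinates partitioned into $s$ blocks, and for a probability vector $p=(p_1,\dots,p_s)$ with all $p_i>0$ let $\mathrm{Gap}(p)$ be the $L_2$-spectral gap of the Random Scan Gibbs Sampler RSGS($p$) for $\pi$. Then for any probability vectors $p,q$ with positive entries, $$\mathrm{Gap}(p)\le\Big(\max_{i=1,\dots,s}\frac{p_i}{q_i}\Big)\mathrm{Gap}(q);$$ in particular $\mathrm{Gap}(p)\le\big(\max_{i}sp_i\big)\,\mathrm{Gap}(1/s)$, where $\mathrm{Gap}(1/s)$ is the spectral gap of RSGS with uniform selection probabilities $(1/s,\dots,1/s)$.
   Context: RSGS($p$) is the Markov kernel $P_p=\sum_{i=1}^sp_iPr_i$, where $Pr_i$ replaces the block $x_i$ of $x=(x_1,\dots,x_s)$ by a draw from the full conditional $\pi(x_i\mid x_{-i})$. For $f\in L_2(\mathbb{R}^d,\pi)$ let $\pi(f)=\int f\,d\pi$. The $L_2$-rate of convergence $\rho(p)$ is the smallest $\rho>0$ such that for all $f\in L_2(\mathbb{R}^d,\pi)$ and $r>\rho$, $\lim_{n\to\infty}r^{-2n}\mathbb{E}_\pi[\{(P_p^nf)(x)-\pi(f)\}^2]=0$, and $\mathrm{Gap}(p)=1-\rho(p)$. *)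

theory Defs
  imports "HOL-Probability.Probability"
begin

text \<open>State space: R^d represented as real^'d with 'd a finite index type (d = CARD('d)).
  The coordinates are partitioned into s blocks B 0, ..., B (s-1).\<close>

text \<open>x_{-i}: the vector x with block i erased (set to 0); all other coordinates kept.\<close>
definition drop_block :: "(nat \<Rightarrow> 'd::finite set) \<Rightarrow> nat \<Rightarrow> real^'d \<Rightarrow> real^'d" where
  "drop_block B i x = (\<chi> j. if j \<in> B i then 0 else x $ j)"

definition others_alg :: "(real^'d::finite) measure \<Rightarrow> (nat \<Rightarrow> 'd set) \<Rightarrow> nat \<Rightarrow> (real^'d) measure" where
  "others_alg \<pi> B i = vimage_algebra (space \<pi>) (drop_block B i) borel"

text \<open>Pr_i acting on L2(pi): (Pr_i f)(x) = E_pi[f | x_{-i}], i.e. integration of f against the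
  full conditional pi(x_i | x_{-i}).\<close>
definition Pr_op :: "(real^'d::finite) measure \<Rightarrow> (nat \<Rightarrow> 'd set) \<Rightarrow> nat \<Rightarrow> (real^'d \<Rightarrow> real) \<Rightarrow> (real^'d \<Rightarrow> real)" where
  "Pr_op \<pi> B i f = real_cond_exp \<pi> (others_alg \<pi> B i) f"

definition rsgs_op :: "(real^'d::finite) measure \<Rightarrow> (nat \<Rightarrow> 'd set) \<Rightarrow> nat \<Rightarrow> (nat \<Rightarrow> real)
    \<Rightarrow> (real^'d \<Rightarrow> real) \<Rightarrow> (real^'d \<Rightarrow> real)" where
  "rsgs_op \<pi> B s p f = (\<lambda>x. \<Sum>i<s. p i * Pr_op \<pi> B i f x)"

definition L2_fun :: "(real^'d::finite) measure \<Rightarrow> (real^'d \<Rightarrow> real) \<Rightarrow> bool" where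
  "L2_fun \<pi> f \<longleftrightarrow> f \<in> borel_measurable \<pi> \<and> integrable \<pi> (\<lambda>x. (f x)^2)"

definition rsgs_rate :: "(real^'d::finite) measure \<Rightarrow> (nat \<Rightarrow> 'd set) \<Rightarrow> nat \<Rightarrow> (nat \<Rightarrow> real) \<Rightarrow> real" where
  "rsgs_rate \<pi> B s p = Inf {\<rho>::real. \<rho> > 0 \<and>
     (\<forall>f. L2_fun \<pi> f \<longrightarrow> (\<forall>r>\<rho>.
        (\<lambda>n. (1 / r) ^ (2 * n) *
           (\<integral>x. (((rsgs_op \<pi> B s p ^^ n) f) x - (\<integral>y. f y \<partial>\<pi>))^2 \<partial>\<pi>)) \<longlonglongrightarrow> 0))}"

definition rsgs_gap :: "(real^'d::finite) measure \<Rightarrow> (nat \<Rightarrow> 'd set) \<Rightarrow> nat \<Rightarrow> (nat \<Rightarrow> real) \<Rightarrow> real" where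
  "rsgs_gap \<pi> B s p = 1 - rsgs_rate \<pi> B s p"

definition prob_vector :: "nat \<Rightarrow> (nat \<Rightarrow> real) \<Rightarrow> bool" where
  "prob_vector s p \<longleftrightarrow> (\<forall>i<s. p i > 0) \<and> (\<Sum>i<s. p i) = 1"

end

theory Submission
  imports Defs
begin


lemma quad_nonneg_disc:
  fixes a b c :: real
  assumes h: "\<And>t. 0 \<le> a + 2 * t * b + t\<^sup>2 * c" and c0: "c \<ge> 0"
  shows "b\<^sup>2 \<le> a * c"
proof (cases "c = 0")
  case True
  have "b = 0"
  proof (rule ccontr)
    assume "b \<noteq> 0"
    have "0 \<le> a + 2 * (-(a+1)/(2*b)) * b" using h[of "-(a+1)/(2*b)"] True by simp
    also have "\<dots> = -1" using \<open>b \<noteq> 0\<close> by (simp add: field_simps)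
    finally show False by simp
  qed
  then show ?thesis using h[of 0] True by simp
next
  case False
  have cp: "c > 0" using False c0 by simp
  have "0 \<le> a + 2 * (-b/c) * b + (-b/c)\<^sup>2 * c" by (rule h)
  also have "\<dots> = a - b\<^sup>2 / c" using cp by (simp add: field_simps power2_eq_square)
  finally show ?thesis using cp by (simp add: field_simps)
qed

definition L2 :: "'a measure \<Rightarrow> ('a \<Rightarrow> real) \<Rightarrow> bool" where
  "L2 M f \<longleftrightarrow> f \<in> borel_measurable M \<and> integrable M (\<lambda>x. (f x)^2)"

context prob_space
begin

lemma L2_meas: "L2 M f \<Longrightarrow> f \<in> borel_measurable M" by (simp add: L2_def)
lemma L2_sq: "L2 M f \<Longrightarrow> integrable M (\<lambda>x. (f x)^2)" by (simp add: L2_def)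
lemma L2_int: "L2 M f \<Longrightarrow> integrable M f"
  unfolding L2_def using square_integrable_imp_integrable by blast

lemma L2_mult: assumes "L2 M f" "L2 M g" shows "integrable M (\<lambda>x. f x * g x)"
proof (rule Bochner_Integration.integrable_bound)
  show "integrable M (\<lambda>x. (f x)^2 + (g x)^2)" using assms by (simp add: L2_def)
  show "(\<lambda>x. f x * g x) \<in> borel_measurable M" using assms by (auto simp: L2_def intro!: borel_measurable_times)
  show "AE x in M. norm (f x * g x) \<le> norm ((f x)^2 + (g x)^2)"
  proof (rule AE_I2)
    fix x
    have "0 \<le> (\<bar>f x\<bar> - \<bar>g x\<bar>)^2" by simp
    hence "2 * (\<bar>f x\<bar> * \<bar>g x\<bar>) \<le> \<bar>f x\<bar>^2 + \<bar>g x\<bar>^2" by (simp add: power2_diff)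
    hence "2 * \<bar>f x * g x\<bar> \<le> (f x)^2 + (g x)^2" by (simp add: abs_mult)
    thus "norm (f x * g x) \<le> norm ((f x)^2 + (g x)^2)" by simp
  qed
qed

lemma L2_add: "L2 M f \<Longrightarrow> L2 M g \<Longrightarrow> L2 M (\<lambda>x. f x + g x)"
  unfolding L2_def power2_sum
  using L2_mult[of f g] by (auto simp: L2_def mult.assoc)

lemma L2_cmult: "L2 M f \<Longrightarrow> L2 M (\<lambda>x. c * f x)"
  unfolding L2_def power_mult_distrib by auto

lemma L2_const: "L2 M (\<lambda>x. c)"
  unfolding L2_def by auto

lemma L2_diff: "L2 M f \<Longrightarrow> L2 M g \<Longrightarrow> L2 M (\<lambda>x. f x - g x)"
  using L2_add[of f "\<lambda>x. (-1) * g x"] L2_cmult[of g "-1"] by simp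

lemma L2_sum: "(\<And>i. i \<in> A \<Longrightarrow> L2 M (f i)) \<Longrightarrow> L2 M (\<lambda>x. \<Sum>i\<in>A. f i x)"
proof (induction A rule: infinite_finite_induct)
  case (infinite A) then show ?case by (simp add: L2_const)
next
  case empty then show ?case by (simp add: L2_const)
next
  case (insert a A)
  then show ?case using L2_add[of "f a" "\<lambda>x. \<Sum>i\<in>A. f i x"] by simp
qed

lemma int_sq_expand:
  assumes "L2 M u" "L2 M v"
  shows "(\<integral>x. (u x + t * v x)^2 \<partial>M) =
     (\<integral>x. (u x)^2 \<partial>M) + 2 * t * (\<integral>x. u x * v x \<partial>M) + t^2 * (\<integral>x. (v x)^2 \<partial>M)"
proof -
  have i1: "integrable M (\<lambda>x. (u x)^2)" "integrable M (\<lambda>x. (v x)^2)"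
    using assms by (auto simp: L2_def)
  have i2: "integrable M (\<lambda>x. u x * v x)" using L2_mult assms by blast
  have "(\<lambda>x. (u x + t * v x)^2) = (\<lambda>x. (u x)^2 + ((2 * t) * (u x * v x) + t^2 * (v x)^2))"
    by (rule ext) (simp add: power2_eq_square algebra_simps)
  hence "(\<integral>x. (u x + t * v x)^2 \<partial>M) = (\<integral>x. (u x)^2 + ((2 * t) * (u x * v x) + t^2 * (v x)^2) \<partial>M)"
    by simp
  also have "\<dots> = (\<integral>x. (u x)^2 \<partial>M) + ((\<integral>x. (2 * t) * (u x * v x) \<partial>M) + (\<integral>x. t^2 * (v x)^2 \<partial>M))"
    using i1 i2 by (simp add: Bochner_Integration.integral_add)
  also have "\<dots> = (\<integral>x. (u x)^2 \<partial>M) + 2 * t * (\<integral>x. u x * v x \<partial>M) + t^2 * (\<integral>x. (v x)^2 \<partial>M)"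
    by simp
  finally show ?thesis .
qed

lemma CS_int:
  assumes "L2 M u" "L2 M v"
  shows "(\<integral>x. u x * v x \<partial>M)^2 \<le> (\<integral>x. (u x)^2 \<partial>M) * (\<integral>x. (v x)^2 \<partial>M)"
proof (rule quad_nonneg_disc)
  show "0 \<le> (\<integral>x. (v x)^2 \<partial>M)" by simp
next
  fix t
  show "0 \<le> (\<integral>x. (u x)^2 \<partial>M) + 2 * t * (\<integral>x. u x * v x \<partial>M) + t^2 * (\<integral>x. (v x)^2 \<partial>M)"
    using int_sq_expand[OF assms, of t] integral_nonneg_AE[of "\<lambda>x. (u x + t * v x)^2" M] by simp
qed

end



locale rsgs = prob_space M for M :: "'a measure" +
  fixes F :: "nat \<Rightarrow> 'a measure" and s :: nat
  assumes subF: "\<And>i. subalgebra M (F i)"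
begin

lemma sfs: "sigma_finite_subalgebra M (F i)"
proof (rule finite_measure_subalgebra_is_sigma_finite)
  show "finite_measure_subalgebra M (F i)"
    by (intro finite_measure_subalgebra.intro finite_measure_axioms finite_measure_subalgebra_axioms.intro subF)
qed

definition E :: "nat \<Rightarrow> ('a \<Rightarrow> real) \<Rightarrow> 'a \<Rightarrow> real" where
  "E i f = real_cond_exp M (F i) f"

definition P :: "(nat \<Rightarrow> real) \<Rightarrow> ('a \<Rightarrow> real) \<Rightarrow> 'a \<Rightarrow> real" where
  "P p f = (\<lambda>x. \<Sum>i<s. p i * E i f x)"

definition Bf :: "(nat \<Rightarrow> real) \<Rightarrow> ('a \<Rightarrow> real) \<Rightarrow> ('a \<Rightarrow> real) \<Rightarrow> real" where
  "Bf p f g = (\<Sum>i<s. p i * (\<integral>x. E i f x * E i g x \<partial>M))"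

definition pv :: "(nat \<Rightarrow> real) \<Rightarrow> bool" where
  "pv p \<longleftrightarrow> (\<forall>i<s. 0 \<le> p i) \<and> (\<Sum>i<s. p i) = 1"

lemma E_measF: "E i f \<in> borel_measurable (F i)"
  unfolding E_def by (rule borel_measurable_cond_exp)

lemma E_meas: "E i f \<in> borel_measurable M"
  unfolding E_def by (rule borel_measurable_cond_exp2)

lemma E_L2: assumes "L2 M f" shows "L2 M (E i f)"
proof -
  have "integrable M (\<lambda>x. power2 (real_cond_exp M (F i) f x))"
    using sigma_finite_subalgebra.integrable_convex_cond_exp[OF sfs, where X=f and I=UNIV and q=power2]
      assms convex_power2 by (auto simp: L2_def L2_int)
  thus ?thesis using E_meas by (simp add: L2_def E_def)
qed

lemma E_sym: assumes "L2 M f" "L2 M g"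
  shows "(\<integral>x. E i f x * g x \<partial>M) = (\<integral>x. E i f x * E i g x \<partial>M)"
  using sigma_finite_subalgebra.real_cond_exp_intg(2)[OF sfs, of "E i f" g i]
    L2_mult[OF E_L2[OF assms(1)] assms(2)] E_measF assms(2)
  by (simp add: L2_def E_def)

lemma E_int: assumes "L2 M f" shows "(\<integral>x. E i f x \<partial>M) = (\<integral>x. f x \<partial>M)"
  using sigma_finite_subalgebra.real_cond_exp_int(2)[OF sfs L2_int[OF assms]] by (simp add: E_def)

lemma E_contr: assumes "L2 M f" shows "(\<integral>x. E i f x * E i f x \<partial>M) \<le> (\<integral>x. (f x)^2 \<partial>M)"
proof -
  define N where "N = (\<integral>x. E i f x * E i f x \<partial>M)"
  have "(\<integral>x. f x * E i f x \<partial>M) = N"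
    using E_sym[OF assms assms, of i] by (simp add: N_def mult.commute)
  hence "N^2 \<le> (\<integral>x. (f x)^2 \<partial>M) * N"
    using CS_int[OF assms E_L2[OF assms], of i] by (simp add: N_def power2_eq_square)
  moreover have "N \<ge> 0" unfolding N_def by (rule integral_nonneg_AE) auto
  ultimately show ?thesis unfolding N_def[symmetric]
    by (cases "N = 0") (auto simp: power2_eq_square)
qed

lemma P_L2: assumes "L2 M f" shows "L2 M (P p f)"
  unfolding P_def by (intro L2_sum L2_cmult E_L2 assms)

lemma P_inner: assumes "L2 M f" "L2 M g"
  shows "(\<integral>x. P p f x * g x \<partial>M) = Bf p f g"
proof -
  have "(\<integral>x. P p f x * g x \<partial>M) = (\<integral>x. (\<Sum>i<s. p i * (E i f x * g x)) \<partial>M)"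
    unfolding P_def by (simp add: sum_distrib_right mult.assoc)
  also have "\<dots> = (\<Sum>i<s. (\<integral>x. p i * (E i f x * g x) \<partial>M))"
    by (rule Bochner_Integration.integral_sum) (intro integrable_mult_right L2_mult E_L2 assms)
  also have "\<dots> = (\<Sum>i<s. p i * (\<integral>x. E i f x * g x \<partial>M))" by simp
  also have "\<dots> = Bf p f g" unfolding Bf_def using E_sym[OF assms] by simp
  finally show ?thesis .
qed

lemma P_int: assumes "L2 M f" shows "(\<integral>x. P p f x \<partial>M) = (\<Sum>i<s. p i) * (\<integral>x. f x \<partial>M)"
proof -
  have "(\<integral>x. P p f x \<partial>M) = (\<Sum>i<s. (\<integral>x. p i * E i f x \<partial>M))"
    unfolding P_def by (rule Bochner_Integration.integral_sum) (intro integrable_mult_right L2_int E_L2 assms)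
  also have "\<dots> = (\<Sum>i<s. p i) * (\<integral>x. f x \<partial>M)"
    using E_int[OF assms] by (simp add: sum_distrib_right)
  finally show ?thesis .
qed

lemma Bf_sym: "Bf p f g = Bf p g f"
  unfolding Bf_def by (simp add: mult.commute)

lemma Bf_nonneg: assumes "pv p" shows "Bf p f f \<ge> 0"
  unfolding Bf_def using assms
  by (intro sum_nonneg mult_nonneg_nonneg) (auto simp: pv_def intro!: integral_nonneg_AE)

lemma Bf_CS: assumes "pv p" "L2 M f" "L2 M g"
  shows "(Bf p f g)^2 \<le> Bf p f f * Bf p g g"
proof (rule quad_nonneg_disc)
  show "0 \<le> Bf p g g" by (rule Bf_nonneg[OF assms(1)])
  fix t
  have "0 \<le> (\<Sum>i<s. p i * (\<integral>x. (E i f x + t * E i g x)^2 \<partial>M))"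
    using assms(1) by (intro sum_nonneg mult_nonneg_nonneg) (auto simp: pv_def intro!: integral_nonneg_AE)
  also have "\<dots> = (\<Sum>i<s. p i * ((\<integral>x. E i f x * E i f x \<partial>M) + 2 * t * (\<integral>x. E i f x * E i g x \<partial>M)
        + t^2 * (\<integral>x. E i g x * E i g x \<partial>M)))"
    using int_sq_expand[OF E_L2[OF assms(2)] E_L2[OF assms(3)]] by (simp add: power2_eq_square)
  also have "\<dots> = Bf p f f + 2 * t * Bf p f g + t^2 * Bf p g g"
    unfolding Bf_def by (simp add: algebra_simps sum.distrib sum_distrib_left)
  finally show "0 \<le> Bf p f f + 2 * t * Bf p f g + t^2 * Bf p g g" .
qed

lemma Bf_gap: assumes "pv p"
  shows "(\<integral>x. (h x)^2 \<partial>M) - Bf p h h = (\<Sum>i<s. p i * ((\<integral>x. (h x)^2 \<partial>M) - (\<integral>x. E i h x * E i h x \<partial>M)))"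
  using assms unfolding Bf_def pv_def
  by (simp add: right_diff_distrib sum_subtractf sum_distrib_right[symmetric])

lemma Bf_le: assumes "pv p" "L2 M h" shows "Bf p h h \<le> (\<integral>x. (h x)^2 \<partial>M)"
proof -
  have "0 \<le> (\<Sum>i<s. p i * ((\<integral>x. (h x)^2 \<partial>M) - (\<integral>x. E i h x * E i h x \<partial>M)))"
    using assms E_contr[OF assms(2)] by (intro sum_nonneg mult_nonneg_nonneg) (auto simp: pv_def)
  thus ?thesis using Bf_gap[OF assms(1), of h] by simp
qed

lemma P_shift: assumes "pv p" "L2 M f"
  shows "AE x in M. P p (\<lambda>z. f z - c) x = P p f x - c"
proof -
  have "\<forall>i\<in>{..<s}. AE x in M. E i (\<lambda>z. f z - c) x = E i f x - c"
  proof
    fix i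
    have "AE x in M. E i (\<lambda>z. f z - c) x = E i f x - E i (\<lambda>z. c) x"
      using sigma_finite_subalgebra.real_cond_exp_diff[OF sfs L2_int[OF assms(2)], of "\<lambda>z. c" i]
      by (simp add: E_def)
    moreover have "AE x in M. E i (\<lambda>z. c) x = c"
      using sigma_finite_subalgebra.real_cond_exp_F_meas[OF sfs, of "\<lambda>z. c" i] by (simp add: E_def)
    ultimately show "AE x in M. E i (\<lambda>z. f z - c) x = E i f x - c" by eventually_elim simp
  qed
  hence "AE x in M. \<forall>i\<in>{..<s}. E i (\<lambda>z. f z - c) x = E i f x - c"
    by (intro eventually_ball_finite) auto
  thus ?thesis
  proof eventually_elim
    case (elim x)
    hence "P p (\<lambda>z. f z - c) x = (\<Sum>i<s. p i * (E i f x - c))" unfolding P_def by simp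
    also have "\<dots> = P p f x - (\<Sum>i<s. p i) * c"
      unfolding P_def by (simp add: right_diff_distrib sum_subtractf sum_distrib_right)
    finally show ?case using assms(1) by (simp add: pv_def)
  qed
qed

lemma Pn_L2: "L2 M f \<Longrightarrow> L2 M ((P p ^^ n) f)"
  by (induction n) (auto intro: P_L2)

lemma Pn_int: assumes "pv p" "L2 M f" shows "(\<integral>x. (P p ^^ n) f x \<partial>M) = (\<integral>x. f x \<partial>M)"
  using assms by (induction n) (auto simp: P_int Pn_L2 pv_def)

end



context rsgs
begin

definition S :: "(nat \<Rightarrow> real) \<Rightarrow> real set" where
  "S p = {\<rho>::real. \<rho> > 0 \<and>
     (\<forall>f. L2 M f \<longrightarrow> (\<forall>r>\<rho>.
        (\<lambda>n. (1 / r) ^ (2 * n) *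
           (\<integral>x. (((P p ^^ n) f) x - (\<integral>y. f y \<partial>M))^2 \<partial>M)) \<longlonglongrightarrow> 0))}"

definition R :: "(nat \<Rightarrow> real) \<Rightarrow> real" where
  "R p = Inf (S p)"

lemma contr:
  assumes pv: "pv p" and c: "c \<ge> 0"
    and H: "\<And>h. L2 M h \<Longrightarrow> (\<integral>x. h x \<partial>M) = 0 \<Longrightarrow> Bf p h h \<le> c * (\<integral>x. (h x)^2 \<partial>M)"
    and h: "L2 M h" "(\<integral>x. h x \<partial>M) = 0"
  shows "(\<integral>x. (P p h x)^2 \<partial>M) \<le> c^2 * (\<integral>x. (h x)^2 \<partial>M)"
proof -
  define g where "g = P p h"
  have g: "L2 M g" unfolding g_def by (rule P_L2[OF h(1)])
  have g0: "(\<integral>x. g x \<partial>M) = 0" unfolding g_def using P_int[OF h(1)] h(2) pv by (simp add: pv_def)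
  define N where "N = (\<integral>x. (g x)^2 \<partial>M)"
  have N0: "N \<ge> 0" unfolding N_def by (rule integral_nonneg_AE) auto
  have "Bf p h g = N" using P_inner[OF h(1) g] by (simp add: N_def g_def power2_eq_square)
  hence "N^2 \<le> Bf p h h * Bf p g g" using Bf_CS[OF pv h(1) g] by simp
  also have "\<dots> \<le> (c * (\<integral>x. (h x)^2 \<partial>M)) * (c * N)"
    using H[OF h] H[OF g g0] Bf_nonneg[OF pv] c N0
      integral_nonneg_AE[of "\<lambda>x. (h x)^2" M] unfolding N_def
    by (intro mult_mono) auto
  finally have *: "N * N \<le> (c^2 * (\<integral>x. (h x)^2 \<partial>M)) * N" by (simp add: power2_eq_square algebra_simps)
  have hh: "(\<integral>x. (h x)^2 \<partial>M) \<ge> 0" by (rule integral_nonneg_AE) auto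
  show ?thesis
  proof (cases "N = 0")
    case True then show ?thesis using hh unfolding N_def g_def by simp
  next
    case False
    hence "N > 0" using N0 by simp
    hence "N \<le> c^2 * (\<integral>x. (h x)^2 \<partial>M)" using * by simp
    thus ?thesis unfolding N_def g_def .
  qed
qed

lemma iter:
  assumes pv: "pv p" and c: "c \<ge> 0"
    and H: "\<And>h. L2 M h \<Longrightarrow> (\<integral>x. h x \<partial>M) = 0 \<Longrightarrow> Bf p h h \<le> c * (\<integral>x. (h x)^2 \<partial>M)"
    and f: "L2 M f"
  shows "(\<integral>x. ((P p ^^ n) f x - (\<integral>y. f y \<partial>M))^2 \<partial>M)
          \<le> (c^2)^n * (\<integral>x. (f x - (\<integral>y. f y \<partial>M))^2 \<partial>M)"
proof (induction n)
  case 0 then show ?case by simp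
next
  case (Suc n)
  define mu where "mu = (\<integral>y. f y \<partial>M)"
  define G where "G = (\<lambda>x. (P p ^^ n) f x - mu)"
  have G: "L2 M G" unfolding G_def by (intro L2_diff Pn_L2 f L2_const)
  have G0: "(\<integral>x. G x \<partial>M) = 0" unfolding G_def mu_def
    using Pn_int[OF pv f, of n] L2_int[OF Pn_L2[OF f, where n=n and p=p]]
    by (simp add: Bochner_Integration.integral_diff prob_space)
  have ae: "AE x in M. P p G x = (P p ^^ Suc n) f x - mu"
    unfolding G_def using P_shift[OF pv Pn_L2[OF f, where n=n and p=p], where c=mu] by simp
  have "(\<integral>x. ((P p ^^ Suc n) f x - mu)^2 \<partial>M) = (\<integral>x. (P p G x)^2 \<partial>M)"
  proof (rule integral_cong_AE)
    show "(\<lambda>x. ((P p ^^ Suc n) f x - mu)^2) \<in> borel_measurable M"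
      using L2_meas[OF Pn_L2[OF f, where n="Suc n" and p=p]] by measurable
    show "(\<lambda>x. (P p G x)^2) \<in> borel_measurable M"
      using L2_meas[OF P_L2[OF G]] by measurable
    show "AE x in M. ((P p ^^ Suc n) f x - mu)^2 = (P p G x)^2" using ae by eventually_elim simp
  qed
  also have "\<dots> \<le> c^2 * (\<integral>x. (G x)^2 \<partial>M)" by (rule contr[OF pv c H G G0])
  also have "\<dots> \<le> c^2 * ((c^2)^n * (\<integral>x. (f x - mu)^2 \<partial>M))"
    using Suc.IH unfolding G_def mu_def by (intro mult_left_mono) auto
  finally show ?case by (simp add: mu_def mult.assoc)
qed

lemma upper:
  assumes pv: "pv p" and c: "c \<ge> 0"
    and H: "\<And>h. L2 M h \<Longrightarrow> (\<integral>x. h x \<partial>M) = 0 \<Longrightarrow> Bf p h h \<le> c * (\<integral>x. (h x)^2 \<partial>M)"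
    and \<rho>: "\<rho> > 0" "\<rho> > c"
  shows "\<rho> \<in> S p"
  unfolding S_def
proof (intro CollectI conjI allI impI \<rho>)
  fix f r assume f: "L2 M f" and r: "r > \<rho>"
  define K where "K = (\<integral>x. (f x - (\<integral>y. f y \<partial>M))^2 \<partial>M)"
  have rp: "r > 0" using r \<rho> by simp
  have q0: "0 \<le> (c/r)^2" by simp
  have q1: "(c/r)^2 < 1" using c r \<rho> rp by (simp add: power_less_one_iff abs_less_iff divide_less_eq power_strict_mono)
  have lim: "(\<lambda>n. ((c/r)^2)^n * K) \<longlonglongrightarrow> 0"
    by (rule tendsto_mult_left_zero) (rule LIMSEQ_power_zero, use q0 q1 in simp)
  show "(\<lambda>n. (1 / r) ^ (2 * n) * (\<integral>x. (((P p ^^ n) f) x - (\<integral>y. f y \<partial>M))^2 \<partial>M)) \<longlonglongrightarrow> 0"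
  proof (rule real_tendsto_sandwich[OF _ _ tendsto_const lim])
    show "\<forall>\<^sub>F n in sequentially. 0 \<le> (1 / r) ^ (2 * n) * (\<integral>x. (((P p ^^ n) f) x - (\<integral>y. f y \<partial>M))^2 \<partial>M)"
      using rp by (intro always_eventually allI mult_nonneg_nonneg integral_nonneg_AE) auto
    show "\<forall>\<^sub>F n in sequentially. (1 / r) ^ (2 * n) * (\<integral>x. (((P p ^^ n) f) x - (\<integral>y. f y \<partial>M))^2 \<partial>M)
        \<le> ((c/r)^2)^n * K"
    proof (intro always_eventually allI)
      fix n
      have "(1 / r) ^ (2 * n) * (\<integral>x. (((P p ^^ n) f) x - (\<integral>y. f y \<partial>M))^2 \<partial>M)
          \<le> (1 / r) ^ (2 * n) * ((c^2)^n * K)"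
        unfolding K_def using iter[OF pv c H f, of n] rp by (intro mult_left_mono) auto
      also have "\<dots> = ((c/r)^2)^n * K"
        by (simp add: power_mult[symmetric] power_divide mult.commute power_mult_distrib[symmetric])
      finally show "(1 / r) ^ (2 * n) * (\<integral>x. (((P p ^^ n) f) x - (\<integral>y. f y \<partial>M))^2 \<partial>M)
        \<le> ((c/r)^2)^n * K" .
    qed
  qed
qed

lemma S_ne: assumes pv: "pv p" shows "2 \<in> S p"
  by (rule upper[OF pv, of 1]) (auto intro: Bf_le[OF pv])

lemma S_bdd: "bdd_below (S p)"
  unfolding S_def by (rule bdd_belowI[of _ 0]) auto

lemma R_nonneg: assumes pv: "pv p" shows "0 \<le> R p"
proof -
  have "S p \<noteq> {}" using S_ne[OF pv] by auto
  thus ?thesis unfolding R_def by (rule cInf_greatest) (auto simp: S_def)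
qed

end



context rsgs
begin

lemma core:
  assumes pv: "pv p" and \<rho>: "\<rho> \<in> S p" and h: "L2 M h" "(\<integral>x. h x \<partial>M) = 0"
    and b0p: "(\<integral>x. (h x)^2 \<partial>M) > 0"
  shows "Bf p h h \<le> \<rho> * (\<integral>x. (h x)^2 \<partial>M)"
proof (rule ccontr)
  assume neg: "\<not> ?thesis"
  define b0 where "b0 = (\<integral>x. (h x)^2 \<partial>M)"
  define Bh where "Bh = Bf p h h"
  have \<rho>0: "\<rho> > 0" using \<rho> by (simp add: S_def)
  have gt: "Bh > \<rho> * b0" using neg by (simp add: Bh_def b0_def)
  have b0: "b0 > 0" using b0p by (simp add: b0_def)
  define m where "m = Bh / b0"
  have m\<rho>: "m > \<rho>" using gt b0 by (simp add: m_def field_simps)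
  define b where "b = (\<lambda>k. \<integral>x. ((P p ^^ k) h x)^2 \<partial>M)"
  have bnn: "b k \<ge> 0" for k unfolding b_def by (rule integral_nonneg_AE) auto
  have Ls: "L2 M ((P p ^^ k) h)" for k by (rule Pn_L2[OF h(1)])
  have logc: "(b (Suc k))^2 \<le> b k * b (Suc (Suc k))" for k
  proof -
    have "b (Suc k) = Bf p ((P p ^^ k) h) ((P p ^^ Suc k) h)"
      using P_inner[OF Ls[of k] Ls[of "Suc k"], of p] by (simp add: b_def power2_eq_square)
    also have "\<dots> = Bf p ((P p ^^ Suc k) h) ((P p ^^ k) h)" by (rule Bf_sym)
    also have "\<dots> = (\<integral>x. (P p ^^ Suc (Suc k)) h x * (P p ^^ k) h x \<partial>M)"
      using P_inner[OF Ls[of "Suc k"] Ls[of k], of p] by simp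
    finally have "b (Suc k) = \<dots>" .
    thus ?thesis using CS_int[OF Ls[of "Suc (Suc k)"] Ls[of k]] by (simp add: b_def mult.commute)
  qed
  have b1: "b 1 \<ge> m^2 * b0"
  proof -
    have "Bh = (\<integral>x. P p h x * h x \<partial>M)" using P_inner[OF h(1) h(1)] by (simp add: Bh_def)
    hence "Bh^2 \<le> b 1 * b0" using CS_int[OF P_L2[OF h(1), of p] h(1)] by (simp add: b_def b0_def)
    thus ?thesis using b0 by (simp add: m_def power_divide field_simps power2_eq_square)
  qed
  have m2p: "m^2 > 0" using m\<rho> \<rho>0 by simp
  have ind: "b k \<ge> (m^2)^k * b0 \<and> b (Suc k) \<ge> m^2 * b k" for k
  proof (induction k)
    case 0 then show ?case using b1 by (simp add: b_def b0_def)
  next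
    case (Suc k)
    hence A: "b k \<ge> (m^2)^k * b0" and Bk: "b (Suc k) \<ge> m^2 * b k" by auto
    have bkp: "b k > 0" using A b0 m2p by (smt (verit) mult_pos_pos zero_less_power)
    have C1: "b (Suc k) \<ge> (m^2)^Suc k * b0"
      using Bk A m2p by (smt (verit, best) mult.assoc mult_left_mono power_Suc)
    have "b k * (m^2 * b (Suc k)) = (m^2 * b k) * b (Suc k)" by (simp add: algebra_simps)
    also have "\<dots> \<le> b (Suc k) * b (Suc k)" by (rule mult_right_mono[OF Bk bnn])
    also have "\<dots> \<le> b k * b (Suc (Suc k))" using logc[of k] by (simp add: power2_eq_square)
    finally have "m^2 * b (Suc k) \<le> b (Suc (Suc k))" using bkp by simp
    with C1 show ?case by simp
  qed
  define r where "r = (\<rho> + m) / 2"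
  have r: "r > \<rho>" "r < m" "r > 0" using m\<rho> \<rho>0 by (auto simp: r_def)
  have "(\<lambda>n. (1 / r) ^ (2 * n) * (\<integral>x. (((P p ^^ n) h) x - (\<integral>y. h y \<partial>M))^2 \<partial>M)) \<longlonglongrightarrow> 0"
    using \<rho> h(1) r(1) by (auto simp: S_def)
  hence "(\<lambda>n. (1 / r) ^ (2 * n) * b n) \<longlonglongrightarrow> 0" using h(2) by (simp add: b_def)
  from order_tendstoD(2)[OF this b0] obtain n where n: "(1 / r) ^ (2 * n) * b n < b0"
    by (auto simp: eventually_sequentially)
  have "b0 \<le> ((m / r)^2)^n * b0"
  proof -
    have "1 \<le> m / r" using r by simp
    hence "1 \<le> ((m / r)^2)^n" by (simp add: one_le_power)
    thus ?thesis using b0 by simp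
  qed
  also have "\<dots> = (1 / r) ^ (2 * n) * ((m^2)^n * b0)"
    by (simp add: power_mult[symmetric] power_divide mult.commute power_mult_distrib[symmetric])
  also have "\<dots> \<le> (1 / r) ^ (2 * n) * b n" using ind[of n] r by (intro mult_left_mono) auto
  finally show False using n by simp
qed

lemma lower:
  assumes pv: "pv p" and h: "L2 M h" "(\<integral>x. h x \<partial>M) = 0"
  shows "Bf p h h \<le> R p * (\<integral>x. (h x)^2 \<partial>M)"
proof (cases "(\<integral>x. (h x)^2 \<partial>M) = 0")
  case True
  have "(Bf p h h)^2 \<le> (\<integral>x. (P p h x)^2 \<partial>M) * (\<integral>x. (h x)^2 \<partial>M)"
    using CS_int[OF P_L2[OF h(1), of p] h(1)] P_inner[OF h(1) h(1)] by simp
  hence "Bf p h h = 0" using True by simp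
  thus ?thesis using True by simp
next
  case False
  have "(\<integral>x. (h x)^2 \<partial>M) \<ge> 0" by (rule integral_nonneg_AE) auto
  hence b0: "(\<integral>x. (h x)^2 \<partial>M) > 0" using False by linarith
  have "S p \<noteq> {}" using S_ne[OF pv] by auto
  hence "Bf p h h / (\<integral>x. (h x)^2 \<partial>M) \<le> R p" unfolding R_def
  proof (rule cInf_greatest)
    fix \<rho> assume "\<rho> \<in> S p"
    thus "Bf p h h / (\<integral>x. (h x)^2 \<partial>M) \<le> \<rho>" using core[OF pv _ h b0] b0 by (simp add: divide_le_eq)
  qed
  thus ?thesis using b0 by (simp add: divide_le_eq)
qed

lemma compare:
  assumes pv: "pv p" and qv: "pv q" and Mx: "Mx \<ge> 1" and pq: "\<And>i. i < s \<Longrightarrow> p i \<le> Mx * q i"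
  shows "1 - R p \<le> Mx * (1 - R q)"
proof -
  define c where "c = 1 - (1 - R p) / Mx"
  have Rp: "R p \<ge> 0" by (rule R_nonneg[OF pv])
  have c0: "c \<ge> 0" using Mx Rp by (simp add: c_def field_simps)
  have H: "Bf q h h \<le> c * (\<integral>x. (h x)^2 \<partial>M)" if h: "L2 M h" "(\<integral>x. h x \<partial>M) = 0" for h
  proof -
    define b0 where "b0 = (\<integral>x. (h x)^2 \<partial>M)"
    define d where "d = (\<lambda>i. b0 - (\<integral>x. E i h x * E i h x \<partial>M))"
    have d0: "i < s \<Longrightarrow> d i \<ge> 0" for i using E_contr[OF h(1)] by (simp add: d_def b0_def)
    have "b0 - Bf p h h = (\<Sum>i<s. p i * d i)" using Bf_gap[OF pv] by (simp add: d_def b0_def)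
    also have "\<dots> \<le> (\<Sum>i<s. (Mx * q i) * d i)" using pq d0 by (intro sum_mono mult_right_mono) auto
    also have "\<dots> = Mx * (\<Sum>i<s. q i * d i)" by (simp add: sum_distrib_left mult.assoc)
    also have "(\<Sum>i<s. q i * d i) = b0 - Bf q h h" using Bf_gap[OF qv] by (simp add: d_def b0_def)
    finally have A: "b0 - Bf p h h \<le> Mx * (b0 - Bf q h h)" .
    have "Bf p h h \<le> R p * b0" using lower[OF pv h] by (simp add: b0_def)
    hence "b0 - R p * b0 \<le> Mx * (b0 - Bf q h h)" using A by simp
    hence "(1 - R p) * b0 \<le> (b0 - Bf q h h) * Mx" by (simp add: algebra_simps)
    hence "(1 - R p) * b0 / Mx \<le> b0 - Bf q h h" using Mx by (simp add: pos_divide_le_eq)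
    hence "Bf q h h \<le> b0 - (1 - R p) * b0 / Mx" by simp
    also have "\<dots> = c * b0" by (simp add: c_def algebra_simps)
    finally show ?thesis by (simp add: b0_def)
  qed
  have Rq: "R q \<le> c"
  proof (rule ccontr)
    assume "\<not> R q \<le> c"
    define \<rho> where "\<rho> = (c + R q) / 2"
    have "\<rho> \<in> S q" using \<open>\<not> R q \<le> c\<close> c0 by (intro upper[OF qv c0 H]) (auto simp: \<rho>_def)
    hence "R q \<le> \<rho>" unfolding R_def by (rule cInf_lower[OF _ S_bdd])
    thus False using \<open>\<not> R q \<le> c\<close> by (simp add: \<rho>_def)
  qed
  hence "(1 - R p) / Mx \<le> 1 - R q" by (simp add: c_def)
  thus ?thesis using Mx by (simp add: divide_le_eq mult.commute)
qed

end



lemma drop_block_meas: "drop_block B i \<in> borel_measurable (borel :: (real^'d::finite) measure)"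
proof (rule borel_measurable_continuous_onI)
  have "continuous_on UNIV (\<lambda>x::real^'d. if j \<in> B i then 0 else x $ j)" for j
    by (cases "j \<in> B i") (auto intro: continuous_intros)
  thus "continuous_on UNIV (drop_block B i)"
    unfolding drop_block_def by (intro continuous_on_vec_lambda)
qed

lemma others_sub:
  fixes \<pi> :: "(real^'d::finite) measure"
  assumes "sets \<pi> = sets borel"
  shows "subalgebra \<pi> (others_alg \<pi> B i)"
proof -
  have m: "drop_block B i \<in> borel_measurable \<pi>"
    using drop_block_meas measurable_cong_sets[OF assms refl] by blast
  show ?thesis unfolding subalgebra_def others_alg_def
  proof
    show "space (vimage_algebra (space \<pi>) (drop_block B i) borel) = space \<pi>" by simp
    show "sets (vimage_algebra (space \<pi>) (drop_block B i) borel) \<subseteq> sets \<pi>"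
      using sets_vimage_algebra2[of "drop_block B i" "space \<pi>" borel] m
      by (auto simp: measurable_sets)
  qed
qed

theorem theorem4:
  fixes \<pi> :: "(real^'d::finite) measure"
    and B :: "nat \<Rightarrow> 'd set"
    and s :: nat
    and p q :: "nat \<Rightarrow> real"
  assumes "prob_space \<pi>"
    and "sets \<pi> = sets borel"
    and "s \<ge> 1"
    and "\<forall>i<s. B i \<noteq> {}"
    and "\<forall>i<s. \<forall>j<s. i \<noteq> j \<longrightarrow> B i \<inter> B j = {}"
    and "(\<Union>i<s. B i) = UNIV"
    and "prob_vector s p"
    and "prob_vector s q"
  shows "rsgs_gap \<pi> B s p \<le> (MAX i\<in>{..<s}. p i / q i) * rsgs_gap \<pi> B s q
       \<and> rsgs_gap \<pi> B s p \<le> (MAX i\<in>{..<s}. real s * p i) * rsgs_gap \<pi> B s (\<lambda>_. 1 / real s)"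
proof -
  interpret R: rsgs \<pi> "others_alg \<pi> B" s
    by (intro rsgs.intro assms(1) rsgs_axioms.intro others_sub assms(2))
  have op: "rsgs_op \<pi> B s p' = R.P p'" for p'
    unfolding rsgs_op_def R.P_def R.E_def Pr_op_def by simp
  have L2eq: "L2_fun \<pi> f = L2 \<pi> f" for f unfolding L2_fun_def L2_def by simp
  have gap: "rsgs_gap \<pi> B s p' = 1 - R.R p'" for p'
    unfolding rsgs_gap_def rsgs_rate_def R.R_def R.S_def op L2eq ..
  have pvv: "R.pv p'" if "prob_vector s p'" for p'
    using that unfolding prob_vector_def R.pv_def by (auto intro: less_imp_le)
  have "0 \<in> {..<s}" using assms(3) by simp
  hence ne: "{..<s} \<noteq> {}" by blast
  have gen: "rsgs_gap \<pi> B s p \<le> (MAX i\<in>{..<s}. p i / q' i) * rsgs_gap \<pi> B s q'"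
    if q': "prob_vector s q'" for q'
  proof -
    define Mx where "Mx = (MAX i\<in>{..<s}. p i / q' i)"
    have le: "p i / q' i \<le> Mx" if "i < s" for i
      unfolding Mx_def using that by (intro Max_ge) auto
    have pq: "p i \<le> Mx * q' i" if "i < s" for i
      using le[OF that] q' that by (auto simp: prob_vector_def divide_le_eq mult.commute)
    obtain i where i: "i < s" "p i \<ge> q' i"
    proof (rule ccontr)
      assume "\<not> thesis"
      hence "\<forall>i<s. p i < q' i" using that by force
      hence "(\<Sum>i<s. p i) < (\<Sum>i<s. q' i)" using ne by (intro sum_strict_mono) auto
      thus False using assms(7) q' by (simp add: prob_vector_def)
    qed
    have "1 \<le> p i / q' i" using i q' by (auto simp: prob_vector_def)
    hence Mx1: "Mx \<ge> 1" using le[OF i(1)] by simp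
    show ?thesis unfolding gap Mx_def[symmetric]
      by (rule R.compare[OF pvv[OF assms(7)] pvv[OF q'] Mx1 pq])
  qed
  have u: "prob_vector s (\<lambda>_. 1 / real s)"
    using assms(3) by (simp add: prob_vector_def)
  have "(MAX i\<in>{..<s}. p i / (1 / real s)) = (MAX i\<in>{..<s}. real s * p i)"
    by (simp add: mult.commute)
  thus ?thesis using gen[OF assms(8)] gen[OF u] by simp
qed


end
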